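(* A $\lambda$-term $M$ is in $\mathsf v$-normal form if and only if $M$ is a $G$-term generated by the following grammar (with $k\ge0$): $G::=H\mid R$; $H::=x\mid\lambda x.G\mid xHG_1\cdots G_k$; $R::=(\lambda x.G)(yHG_1\cdots G_k)$.
   Context: $\lambda$-terms and values are $M,N::=V\mid MN$, $V::=x\mid\lambda x.M$ (application associates to the left), up to $\alpha$-conversion. Rules: $(\beta_v)$ $(\lambda x.M)V\to M\{x:=V\}$ if $V$ is a value; $(\sigma_1)$ $(\lambda x.M)NP\to(\lambda x.MP)N$ if $x\notin\mathrm{FV}(P)$; $(\sigma_3)$ $V((\lambda x.M)N)\to(\lambda x.VM)N$ if $V$ is a value and $x\notin\mathrm{FV}(V)$. $\to_{\mathsf v}$ is the contextual closure of their union; $M$ is in $\mathsf v$-normal form if there is no $N$ with $M\to_{\mathsf v}N$. *)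

theory Defs
  imports Main
begin

text \<open>Lambda-terms up to alpha-conversion, represented with de Bruijn indices.\<close>
datatype trm = Var nat | Lam trm | App trm trm

fun is_value :: "trm \<Rightarrow> bool" where
  "is_value (Var _) = True"
| "is_value (Lam _) = True"
| "is_value (App _ _) = False"

fun lift :: "nat \<Rightarrow> trm \<Rightarrow> trm" where
  "lift k (Var i) = (if i < k then Var i else Var (Suc i))"
| "lift k (Lam M) = Lam (lift (Suc k) M)"
| "lift k (App M N) = App (lift k M) (lift k N)"

fun subst :: "trm \<Rightarrow> nat \<Rightarrow> trm \<Rightarrow> trm" where
  "subst (Var i) k s = (if k < i then Var (i - 1) else if i = k then s else Var i)"
| "subst (Lam M) k s = Lam (subst M (Suc k) (lift 0 s))"
| "subst (App M N) k s = App (subst M k s) (subst N k s)"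

text \<open>The reduction \<open>\<rightarrow>\<^sub>v\<close>: contextual closure of beta_v, sigma1, sigma3.
  The freshness side conditions of sigma1/sigma3 are realised by lifting.\<close>
inductive step_v :: "trm \<Rightarrow> trm \<Rightarrow> bool" where
  beta_v: "is_value V \<Longrightarrow> step_v (App (Lam M) V) (subst M 0 V)"
| sigma1: "step_v (App (App (Lam M) N) P) (App (Lam (App M (lift 0 P))) N)"
| sigma3: "is_value V \<Longrightarrow> step_v (App V (App (Lam M) N)) (App (Lam (App (lift 0 V) M)) N)"
| appL: "step_v M M' \<Longrightarrow> step_v (App M N) (App M' N)"
| appR: "step_v N N' \<Longrightarrow> step_v (App M N) (App M N')"
| lam: "step_v M M' \<Longrightarrow> step_v (Lam M) (Lam M')"

definition v_normal :: "trm \<Rightarrow> bool" where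
  "v_normal M \<longleftrightarrow> \<not> (\<exists>N. step_v M N)"

text \<open>The grammar: G ::= H | R;  H ::= x | \<lambda>x.G | x H G1..Gk;  R ::= (\<lambda>x.G)(y H G1..Gk).
  \<open>isA\<close> characterises the terms x H G1 ... Gk (k \<ge> 0).\<close>
inductive isG :: "trm \<Rightarrow> bool" and isH :: "trm \<Rightarrow> bool" and isA :: "trm \<Rightarrow> bool" where
  G_H: "isH M \<Longrightarrow> isG M"
| G_R: "isG M \<Longrightarrow> isA N \<Longrightarrow> isG (App (Lam M) N)"
| H_Var: "isH (Var x)"
| H_Lam: "isG M \<Longrightarrow> isH (Lam M)"
| H_A: "isA M \<Longrightarrow> isH M"
| A_base: "isH N \<Longrightarrow> isA (App (Var x) N)"
| A_app: "isA M \<Longrightarrow> isG N \<Longrightarrow> isA (App M N)"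

end

theory Submission
  imports Defs
begin

inductive_cases stepLamE: "step_v (Lam M) K"
inductive_cases stepVarE: "step_v (Var x) K"
inductive_cases stepAppE: "step_v (App M N) K"

lemma nf_App: "v_normal (App M N) \<Longrightarrow> v_normal M \<and> v_normal N"
  unfolding v_normal_def by (meson step_v.appL step_v.appR)

lemma nf_Lam: "v_normal (Lam M) \<Longrightarrow> v_normal M"
  unfolding v_normal_def by (meson step_v.lam)

lemma G_cases: "isG N \<Longrightarrow> isH N \<or> (\<exists>P Q. N = App (Lam P) Q)"
  by (erule isG.cases) auto

lemma H_App: "isH (App P Q) \<Longrightarrow> isA (App P Q)"
  by (erule isH.cases) auto

lemma A_not_Lam: "isA (Lam P) \<Longrightarrow> False"
  by (erule isA.cases) auto

lemma G_Lam: assumes "isG (Lam P)" shows "isG P"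
proof -
  have "isH (Lam P)" using assms by (cases rule: isG.cases) auto
  then show ?thesis by (cases rule: isH.cases) (auto dest: A_not_Lam)
qed

lemma nf_G: "v_normal M \<Longrightarrow> isG M"
proof (induction M)
  case (Var x)
  show ?case by (rule G_H, rule H_Var)
next
  case (Lam M)
  then have "isG M" using nf_Lam by blast
  then show ?case by (rule G_H[OF H_Lam])
next
  case (App M N)
  have nM: "v_normal M" and nN: "v_normal N" using nf_App[OF App.prems] by auto
  have gM: "isG M" using App.IH nM by auto
  have gN: "isG N" using App.IH nN by auto
  show ?case
  proof (cases M)
    case (Var x)
    have "\<not> (\<exists>P Q. N = App (Lam P) Q)"
    proof
      assume "\<exists>P Q. N = App (Lam P) Q"
      then obtain P Q where "N = App (Lam P) Q" by auto
      then have "step_v (App M N) (App (Lam (App (lift 0 M) P)) Q)"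
        using Var step_v.sigma3[of M P Q] by simp
      then show False using App.prems unfolding v_normal_def by auto
    qed
    then have "isH N" using G_cases[OF gN] by blast
    then show ?thesis using Var by (simp add: G_H H_A A_base)
  next
    case (Lam P)
    have nv: "\<not> is_value N"
    proof
      assume "is_value N"
      then have "step_v (App M N) (subst P 0 N)" using Lam by (auto intro: step_v.beta_v)
      then show False using App.prems unfolding v_normal_def by auto
    qed
    then obtain N1 N2 where NN: "N = App N1 N2" by (cases N) auto
    have "\<not> (\<exists>R. N1 = Lam R)"
    proof
      assume "\<exists>R. N1 = Lam R"
      then obtain R where "N1 = Lam R" by auto
      then have "step_v (App M N) (App (Lam (App (lift 0 M) R)) N2)"
        using Lam NN step_v.sigma3[of M R N2] by simp
      then show False using App.prems unfolding v_normal_def by auto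
    qed
    then have "isH N" using G_cases[OF gN] NN by blast
    then have "isA N" using H_App NN by auto
    moreover have "isG P" using gM Lam G_Lam by blast
    ultimately show ?thesis using Lam by (simp add: G_R)
  next
    case (App M1 M2)
    have "\<not> (\<exists>R. M1 = Lam R)"
    proof
      assume "\<exists>R. M1 = Lam R"
      then obtain R where "M1 = Lam R" by auto
      then have "step_v (App M N) (App (Lam (App R (lift 0 N))) M2)"
        using App by (auto intro: step_v.sigma1)
      then show False using App.prems \<open>M = App M1 M2\<close>
        unfolding v_normal_def by auto
    qed
    then have "isH M" using G_cases[OF gM] App by blast
    then have "isA M" using H_App App by auto
    then show ?thesis using gN by (rule G_H[OF H_A[OF A_app]])
  qed
qed

lemma G_nf_aux:
  "(isG M \<longrightarrow> (\<forall>N. \<not> step_v M N)) \<and>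
   (isH M \<longrightarrow> (\<forall>N. \<not> step_v M N) \<and> \<not> (\<exists>P Q. M = App (Lam P) Q)) \<and>
   (isA M \<longrightarrow> (\<forall>N. \<not> step_v M N) \<and> (\<exists>M1 M2. M = App M1 M2 \<and> \<not> is_value M \<and> (\<forall>R. M1 \<noteq> Lam R)))"
proof (induction rule: isG_isH_isA.induct)
  case (G_H M)
  then show ?case by auto
next
  case (G_R M N)
  show ?case
  proof (intro allI notI)
    fix K assume "step_v (App (Lam M) N) K"
    then show False using G_R
      by (elim stepAppE) (auto elim: stepLamE)
  qed
next
  case (H_Var x)
  then show ?case by (auto elim: stepVarE)
next
  case (H_Lam M)
  then show ?case by (auto elim: stepLamE)
next
  case (H_A M)
  then show ?case by auto
next
  case (A_base N x)
  show ?case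
  proof (intro conjI allI notI)
    fix K assume "step_v (App (Var x) N) K"
    then show False using A_base
      by (elim stepAppE) (auto elim: stepVarE)
  qed auto
next
  case (A_app M N)
  have nsM: "\<And>K. \<not> step_v M K" and nsN: "\<And>K. \<not> step_v N K" using A_app by auto
  obtain M1 M2 where MM: "M = App M1 M2" and nv: "\<not> is_value M" and nl: "\<And>R. M1 \<noteq> Lam R"
    using A_app by blast
  have ns: "\<forall>K. \<not> step_v (App M N) K"
  proof (intro allI notI)
    fix K assume st: "step_v (App M N) K"
    have nl2: "\<And>R Q. M \<noteq> App (Lam R) Q" using MM nl by simp
    have nl3: "\<And>R. M \<noteq> Lam R" using MM by simp
    show False
    proof (rule stepAppE[OF st], goal_cases)
      case 1 then show ?case using nl3 by metis
    next
      case 2 then show ?case using nl2 by metis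
    next
      case 3 then show ?case using nv by metis
    next
      case 4 then show ?case using nsM by metis
    next
      case 5 then show ?case using nsN by metis
    qed
  qed
  have ex: "\<exists>M1 M2. App M N = App M1 M2 \<and> \<not> is_value (App M N) \<and> (\<forall>R. M1 \<noteq> Lam R)"
    using MM by simp
  show ?case using ns ex by (rule conjI)
qed

theorem lemma1p7:
  shows "v_normal M \<longleftrightarrow> isG M"
proof
  assume "v_normal M" then show "isG M" by (rule nf_G)
next
  assume "isG M" then show "v_normal M" using G_nf_aux unfolding v_normal_def by simp
qed

end
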